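(* Every non-abelian free group of finite rank has exponential automorphic growth.
   Context: For a finitely generated group $G$ with finite generating set $\Sigma$, the automorphic growth function sends $n$ to the number of $\operatorname{Aut}(G)$-orbits of $G$ containing an element of word length at most $n$ with respect to $\Sigma$. For non-decreasing non-zero $f,g\colon\mathbb{N}\to\mathbb{N}$ write $f\preccurlyeq g$ if there is $\lambda\in\mathbb{N}\setminus\{0\}$ with $f(n)\le\lambda g(\lambda n+\lambda)+\lambda$ for all $n$, and $f\sim g$ if $f\preccurlyeq g$ and $g\preccurlyeq f$. Exponential automorphic growth means the automorphic growth function is $\sim$-equivalent to $n\mapsto 2^n$; this is independent of the generating set. *)

theory Defs
  imports "HOL-Algebra.Generated_Groups"
begin

text \<open>Letters are pairs (i, b) with i < r; b = True is the generator x_i,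
  b = False its inverse.\<close>

type_synonym fg_word = "(nat \<times> bool) list"

definition cancels :: "nat \<times> bool \<Rightarrow> nat \<times> bool \<Rightarrow> bool" where
  "cancels x y \<longleftrightarrow> fst x = fst y \<and> snd x \<noteq> snd y"

fun reduced :: "fg_word \<Rightarrow> bool" where
  "reduced [] = True"
| "reduced [x] = True"
| "reduced (x # y # zs) = (\<not> cancels x y \<and> reduced (y # zs))"

definition push :: "nat \<times> bool \<Rightarrow> fg_word \<Rightarrow> fg_word" where
  "push x w = (case w of [] \<Rightarrow> [x] | y # ys \<Rightarrow> (if cancels x y then ys else x # w))"

definition reduce :: "fg_word \<Rightarrow> fg_word" where
  "reduce w = foldr push w []"

definition free_group :: "nat \<Rightarrow> fg_word monoid" where
  "free_group r = \<lparr> carrier = {w. reduced w \<and> (\<forall>x \<in> set w. fst x < r)},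
                    mult = (\<lambda>u v. reduce (u @ v)),
                    one = [] \<rparr>"

definition word_length :: "('a, 'b) monoid_scheme \<Rightarrow> 'a set \<Rightarrow> 'a \<Rightarrow> nat" where
  "word_length G S g = (LEAST n. \<exists>ws. length ws = n \<and>
      set ws \<subseteq> S \<union> m_inv G ` S \<and> foldr (\<otimes>\<^bsub>G\<^esub>) ws \<one>\<^bsub>G\<^esub> = g)"

definition aut_orbit :: "('a, 'b) monoid_scheme \<Rightarrow> 'a \<Rightarrow> 'a set" where
  "aut_orbit G g = {\<phi> g | \<phi>. \<phi> \<in> iso G G}"

definition aut_growth :: "('a, 'b) monoid_scheme \<Rightarrow> 'a set \<Rightarrow> nat \<Rightarrow> nat" where
  "aut_growth G S n = card {Orb \<in> aut_orbit G ` carrier G. \<exists>g \<in> Orb. word_length G S g \<le> n}"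

definition growth_le :: "(nat \<Rightarrow> nat) \<Rightarrow> (nat \<Rightarrow> nat) \<Rightarrow> bool" (infix "\<preccurlyeq>\<^sub>g" 50) where
  "f \<preccurlyeq>\<^sub>g g \<longleftrightarrow> (\<exists>c::nat. c \<noteq> 0 \<and> (\<forall>n. f n \<le> c * g (c * n + c) + c))"

definition growth_equiv :: "(nat \<Rightarrow> nat) \<Rightarrow> (nat \<Rightarrow> nat) \<Rightarrow> bool" (infix "\<sim>\<^sub>g" 50) where
  "f \<sim>\<^sub>g g \<longleftrightarrow> f \<preccurlyeq>\<^sub>g g \<and> g \<preccurlyeq>\<^sub>g f"

end

theory Submission
  imports Defs
begin

lemma push_reduced: "reduced w \<Longrightarrow> reduced (push x w)"
  by (cases w rule: reduced.cases) (auto simp: push_def split: if_splits)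

lemma foldr_push_reduced: "reduced acc \<Longrightarrow> reduced (foldr push xs acc)"
  by (induction xs) (auto simp: push_reduced)

lemma reduce_reduced: "reduced (reduce w)"
  unfolding reduce_def by (rule foldr_push_reduced) simp

lemma reduced_tl: "reduced (x # w) \<Longrightarrow> reduced w"
  by (cases w) auto

lemma push_noncancel: "reduced (x # w) \<Longrightarrow> push x w = x # w"
  by (cases w) (auto simp: push_def)

lemma reduce_id: "reduced w \<Longrightarrow> reduce w = w"
proof (induction w)
  case Nil then show ?case by (simp add: reduce_def)
next
  case (Cons x w)
  then have "reduce w = w" using reduced_tl by blast
  then show ?case using Cons.prems by (simp add: reduce_def push_noncancel)
qed

lemma cancels_eq: "cancels x z \<Longrightarrow> cancels z y \<Longrightarrow> x = y"
  by (cases x; cases y; cases z) (auto simp: cancels_def)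

lemma push_push_cancel: "cancels x z \<Longrightarrow> reduced v \<Longrightarrow> push x (push z v) = v"
proof (cases v)
  case Nil
  assume "cancels x z" then show ?thesis using Nil by (simp add: push_def)
next
  case (Cons y ys)
  assume c: "cancels x z" and r: "reduced v"
  show ?thesis
  proof (cases "cancels z y")
    case True
    then have xy: "x = y" using c cancels_eq by blast
    have "push x ys = y # ys"
    proof (cases ys)
      case Nil then show ?thesis using xy by (simp add: push_def)
    next
      case (Cons y' ys')
      then have "\<not> cancels y y'" using r \<open>v = y # ys\<close> by simp
      then show ?thesis using xy Cons by (simp add: push_def)
    qed
    then show ?thesis using True Cons by (simp add: push_def)
  next
    case False
    then show ?thesis using c Cons by (simp add: push_def)
  qed
qed

lemma foldr_push_push: "reduced y \<Longrightarrow> reduced acc \<Longrightarrow>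
   foldr push (push x y) acc = push x (foldr push y acc)"
proof (cases y)
  case Nil then show ?thesis by (simp add: push_def)
next
  case (Cons z zs)
  assume ry: "reduced y" and ra: "reduced acc"
  show ?thesis
  proof (cases "cancels x z")
    case True
    have rz: "reduced (foldr push zs acc)" using ra foldr_push_reduced by blast
    have "push x y = zs" using True Cons by (simp add: push_def)
    moreover have "push x (foldr push y acc) = foldr push zs acc"
      using Cons push_push_cancel[OF True rz] by simp
    ultimately show ?thesis by simp
  next
    case False then show ?thesis using Cons by (simp add: push_def)
  qed
qed

lemma foldr_push_reduce: "reduced acc \<Longrightarrow> foldr push (reduce xs) acc = foldr push xs acc"
proof (induction xs)
  case Nil then show ?case by (simp add: reduce_def)
next
  case (Cons x xs)
  have "foldr push (reduce (x # xs)) acc = foldr push (push x (reduce xs)) acc"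
    by (simp add: reduce_def)
  also have "\<dots> = push x (foldr push (reduce xs) acc)"
    using foldr_push_push reduce_reduced Cons.prems by blast
  also have "\<dots> = foldr push (x # xs) acc" using Cons by simp
  finally show ?case .
qed

lemma reduce_append: "reduce (xs @ ys) = foldr push xs (reduce ys)"
  by (simp add: reduce_def)

lemma reduce_assoc: "reduce (reduce (u @ v) @ w) = reduce (u @ reduce (v @ w))"
proof -
  have "reduce (reduce (u @ v) @ w) = foldr push (reduce (u @ v)) (reduce w)"
    by (simp add: reduce_append)
  also have "\<dots> = foldr push (u @ v) (reduce w)"
    by (simp add: foldr_push_reduce reduce_reduced)
  also have "\<dots> = reduce (u @ v @ w)" by (simp add: reduce_def)
  also have "\<dots> = foldr push u (reduce (v @ w))"
    by (rule reduce_append)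
  also have "\<dots> = foldr push u (reduce (reduce (v @ w)))"
    by (simp only: reduce_id[OF reduce_reduced])
  also have "\<dots> = reduce (u @ reduce (v @ w))"
    by (simp only: reduce_append)
  finally show ?thesis .
qed

definition flip :: "nat \<times> bool \<Rightarrow> nat \<times> bool" where "flip x = (fst x, \<not> snd x)"
definition winv :: "fg_word \<Rightarrow> fg_word" where "winv u = rev (map flip u)"

lemma cancels_flip: "cancels x (flip x)" "cancels (flip x) x"
  by (auto simp: cancels_def flip_def)

lemma foldr_push_inv: "reduced acc \<Longrightarrow> foldr push (u @ winv u) acc = acc"
proof (induction u arbitrary: acc)
  case Nil then show ?case by (simp add: winv_def)
next
  case (Cons x u)
  have "foldr push ((x # u) @ winv (x # u)) acc = push x (foldr push (u @ winv u) (push (flip x) acc))"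
    by (simp add: winv_def)
  also have "\<dots> = push x (push (flip x) acc)" using Cons push_reduced by simp
  also have "\<dots> = acc" using Cons.prems cancels_flip push_push_cancel by blast
  finally show ?case .
qed

lemma winv_winv: "winv (winv u) = u"
  by (simp add: winv_def rev_map comp_def flip_def)

lemma set_push: "set (push x w) \<subseteq> insert x (set w)"
  by (auto simp: push_def split: list.splits)

lemma set_foldr_push: "set (foldr push xs acc) \<subseteq> set xs \<union> set acc"
proof (induction xs)
  case (Cons x xs)
  then show ?case using set_push[of x "foldr push xs acc"] by auto
qed simp

lemma set_reduce: "set (reduce xs) \<subseteq> set xs"
  using set_foldr_push[of xs "[]"] by (simp add: reduce_def)

lemma inv_cancel: "reduced x \<Longrightarrow> reduce (reduce (winv x) @ x) = []"
proof -
  assume rx: "reduced x"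
  have "reduce (reduce (winv x) @ x) = foldr push (reduce (winv x)) x"
    using reduce_append reduce_id[OF rx] by simp
  also have "\<dots> = foldr push (winv x) x" using foldr_push_reduce rx by blast
  also have "\<dots> = foldr push (winv x @ winv (winv x)) []"
  proof -
    have "foldr push x [] = x" using reduce_id[OF rx] unfolding reduce_def .
    then show ?thesis by (simp add: winv_winv)
  qed
  also have "\<dots> = []" using foldr_push_inv by simp
  finally show ?thesis .
qed

lemma G_group: "group (free_group r)"
proof (rule groupI)
  fix x y assume "x \<in> carrier (free_group r)" "y \<in> carrier (free_group r)"
  then show "x \<otimes>\<^bsub>free_group r\<^esub> y \<in> carrier (free_group r)"
    using set_reduce[of "x @ y"] reduce_reduced by (auto simp: free_group_def)
next
  show "\<one>\<^bsub>free_group r\<^esub> \<in> carrier (free_group r)" by (simp add: free_group_def)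
next
  fix x y z assume "x \<in> carrier (free_group r)" "y \<in> carrier (free_group r)" "z \<in> carrier (free_group r)"
  then show "x \<otimes>\<^bsub>free_group r\<^esub> y \<otimes>\<^bsub>free_group r\<^esub> z = x \<otimes>\<^bsub>free_group r\<^esub> (y \<otimes>\<^bsub>free_group r\<^esub> z)"
    by (simp add: free_group_def reduce_assoc)
next
  fix x assume "x \<in> carrier (free_group r)"
  then show "\<one>\<^bsub>free_group r\<^esub> \<otimes>\<^bsub>free_group r\<^esub> x = x"
    by (simp add: free_group_def reduce_id)
next
  fix x assume x: "x \<in> carrier (free_group r)"
  show "\<exists>y\<in>carrier (free_group r). y \<otimes>\<^bsub>free_group r\<^esub> x = \<one>\<^bsub>free_group r\<^esub>"
  proof (intro bexI)
    show "reduce (winv x) \<otimes>\<^bsub>free_group r\<^esub> x = \<one>\<^bsub>free_group r\<^esub>"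
      using x inv_cancel by (simp add: free_group_def)
    have "set (winv x) \<subseteq> set (map flip x)" by (simp add: winv_def)
    then show "reduce (winv x) \<in> carrier (free_group r)"
      using x set_reduce[of "winv x"] reduce_reduced by (fastforce simp: free_group_def flip_def)
  qed
qed

type_synonym qel = "(int \<Rightarrow> int) \<times> int"

definition qmul :: "qel \<Rightarrow> qel \<Rightarrow> qel" where
  "qmul p q = (\<lambda>t. fst p t + fst q (t - snd p), snd p + snd q)"

definition qone :: qel where "qone = (\<lambda>t. 0, 0)"

definition Qg :: "qel monoid" where
  "Qg = \<lparr>carrier = {p. finite {t. fst p t \<noteq> 0}}, mult = qmul, one = qone\<rparr>"

lemma qmul_assoc: "qmul (qmul p q) s = qmul p (qmul q s)"
  by (simp add: qmul_def algebra_simps)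

lemma qmul_one[simp]: "qmul qone p = p" "qmul p qone = p"
  by (simp_all add: qmul_def qone_def)

lemma qmul_closed:
  assumes "finite {t. fst p t \<noteq> 0}" "finite {t. fst q t \<noteq> 0}"
  shows "finite {t. fst (qmul p q) t \<noteq> 0}"
proof -
  have "{t. fst (qmul p q) t \<noteq> 0} \<subseteq> {t. fst p t \<noteq> 0} \<union> (\<lambda>u. u + snd p) ` {t. fst q t \<noteq> 0}"
    by (auto simp: qmul_def image_iff) (metis diff_add_cancel)
  then show ?thesis using assms by (meson finite_UnI finite_imageI finite_subset)
qed

lemma Q_group: "group Qg"
proof (rule groupI)
  fix x y assume "x \<in> carrier Qg" "y \<in> carrier Qg"
  then show "x \<otimes>\<^bsub>Qg\<^esub> y \<in> carrier Qg" by (simp add: Qg_def qmul_closed)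
next
  show "\<one>\<^bsub>Qg\<^esub> \<in> carrier Qg" by (simp add: Qg_def qone_def)
next
  fix x y z show "x \<otimes>\<^bsub>Qg\<^esub> y \<otimes>\<^bsub>Qg\<^esub> z = x \<otimes>\<^bsub>Qg\<^esub> (y \<otimes>\<^bsub>Qg\<^esub> z)"
    by (simp add: Qg_def qmul_assoc)
next
  fix x show "\<one>\<^bsub>Qg\<^esub> \<otimes>\<^bsub>Qg\<^esub> x = x" by (simp add: Qg_def)
next
  fix x assume x: "x \<in> carrier Qg"
  let ?y = "(\<lambda>t. - fst x (t + snd x), - snd x)"
  show "\<exists>y\<in>carrier Qg. y \<otimes>\<^bsub>Qg\<^esub> x = \<one>\<^bsub>Qg\<^esub>"
  proof (intro bexI)
    show "?y \<otimes>\<^bsub>Qg\<^esub> x = \<one>\<^bsub>Qg\<^esub>" by (simp add: Qg_def qmul_def qone_def)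
    have "{t. fst ?y t \<noteq> 0} = (\<lambda>u. u - snd x) ` {t. fst x t \<noteq> 0}"
      by (auto simp: image_iff) (metis add_diff_cancel)
    then show "?y \<in> carrier Qg" using x by (simp add: Qg_def)
  qed
qed

lemma qinv_unique: "qmul p q = qone \<Longrightarrow> q = (\<lambda>t. - fst p (t + snd p), - snd p)"
proof -
  assume h: "qmul p q = qone"
  then have s: "snd q = - snd p" by (simp add: qmul_def qone_def prod_eq_iff)
  have "fst p (u + snd p) + fst q u = 0" for u
    using fun_cong[OF arg_cong[where f=fst, OF h], of "u + snd p"] by (simp add: qmul_def qone_def)
  then have "fst q = (\<lambda>t. - fst p (t + snd p))" by (auto simp: algebra_simps eq_neg_iff_add_eq_0)
  then show ?thesis using s by (metis prod.collapse)
qed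

definition evg :: "(nat \<times> bool \<Rightarrow> qel) \<Rightarrow> fg_word \<Rightarrow> qel" where
  "evg g ws = foldr (\<lambda>x acc. qmul (g x) acc) ws qone"

lemma evg_simps[simp]: "evg g [] = qone" "evg g (x # ws) = qmul (g x) (evg g ws)"
  by (simp_all add: evg_def)

lemma evg_append: "evg g (u @ v) = qmul (evg g u) (evg g v)"
  by (induction u) (simp_all add: qmul_assoc)

definition img :: "nat \<times> bool \<Rightarrow> qel" where
  "img x = (if fst x = 0 then (\<lambda>t. 0, if snd x then 1 else -1)
            else if fst x = 1 then ((\<lambda>t. if t = 0 then (if snd x then 1 else -1) else 0), 0)
            else qone)"

lemma img_cancel: "cancels x y \<Longrightarrow> qmul (img x) (img y) = qone"
  by (cases x; cases y) (auto simp: cancels_def img_def qmul_def qone_def fun_eq_iff)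

lemma ev_push: "evg img (push x w) = qmul (img x) (evg img w)"
proof (cases w)
  case (Cons y ys)
  show ?thesis
  proof (cases "cancels x y")
    case True
    then show ?thesis using Cons img_cancel
      by (simp add: push_def qmul_assoc[symmetric])
  qed (simp add: push_def Cons)
qed (simp add: push_def)

lemma ev_foldr_push: "evg img (foldr push xs acc) = qmul (evg img xs) (evg img acc)"
  by (induction xs) (simp_all add: ev_push qmul_assoc)

lemma ev_reduce: "evg img (reduce w) = evg img w"
  using ev_foldr_push[of w "[]"] by (simp add: reduce_def)

lemma img_carrier: "finite {t. fst (img x) t \<noteq> 0}"
  by (simp add: img_def qone_def)

lemma evg_carrier: "(\<And>x. finite {t. fst (g x) t \<noteq> 0}) \<Longrightarrow> finite {t. fst (evg g ws) t \<noteq> 0}"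
  by (induction ws) (simp_all add: qone_def qmul_closed)

lemma ev_hom: "evg img \<in> hom (free_group r) Qg"
proof (rule homI)
  fix x show "evg img x \<in> carrier Qg" using evg_carrier img_carrier by (simp add: Qg_def)
next
  fix x y show "evg img (x \<otimes>\<^bsub>free_group r\<^esub> y) = evg img x \<otimes>\<^bsub>Qg\<^esub> evg img y"
    by (simp add: free_group_def Qg_def ev_reduce evg_append)
qed

lemma reduce_Cons: "reduce (x # ws) = push x (reduce ws)"
  by (simp add: reduce_def)

lemma mult_single: "[x] \<otimes>\<^bsub>free_group r\<^esub> acc = reduce (x # acc)"
  by (simp add: free_group_def)

lemma single_carrier: "fst x < r \<Longrightarrow> [x] \<in> carrier (free_group r)"
  by (simp add: free_group_def)

lemma reduce_carrier: "\<forall>x\<in>set ws. fst x < r \<Longrightarrow> reduce ws \<in> carrier (free_group r)"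
  using set_reduce[of ws] reduce_reduced by (auto simp: free_group_def)

lemma reduce_as_prod: "reduce ws = foldr (\<lambda>x acc. [x] \<otimes>\<^bsub>free_group r\<^esub> acc) ws []"
proof (induction ws)
  case Nil then show ?case by (simp add: reduce_def)
next
  case (Cons x ws)
  have "reduce (x # ws) = [x] \<otimes>\<^bsub>free_group r\<^esub> reduce ws"
    by (simp add: mult_single reduce_Cons reduce_id reduce_reduced)
  then show ?case using Cons by simp
qed

lemma hom_reduce:
  assumes f: "f \<in> hom (free_group r) Qg" and ws: "\<forall>x\<in>set ws. fst x < r"
  shows "f (reduce ws) = evg (\<lambda>x. f [x]) ws"
  using ws
proof (induction ws)
  case Nil
  have "group_hom (free_group r) Qg f"
    using f G_group Q_group by (simp add: group_hom_def group_hom_axioms_def)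
  then have "f \<one>\<^bsub>free_group r\<^esub> = \<one>\<^bsub>Qg\<^esub>" by (rule group_hom.hom_one)
  then show ?case by (simp add: reduce_def free_group_def Qg_def)
next
  case (Cons x ws)
  have "reduce (x # ws) = [x] \<otimes>\<^bsub>free_group r\<^esub> reduce ws"
    by (simp add: mult_single reduce_Cons reduce_id reduce_reduced)
  then have "f (reduce (x # ws)) = f [x] \<otimes>\<^bsub>Qg\<^esub> f (reduce ws)"
    using f Cons.prems single_carrier reduce_carrier by (simp add: hom_def)
  then show ?case using Cons by (simp add: Qg_def)
qed

abbreviation "la \<equiv> (0::nat, True)"
abbreviation "lai \<equiv> (0::nat, False)"
abbreviation "lb \<equiv> (1::nat, True)"
abbreviation "lbi \<equiv> (1::nat, False)"

definition cw :: fg_word where "cw = [la, lb, lai, lbi]"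
definition blk :: "bool \<Rightarrow> fg_word" where "blk e = la # (if e then cw else [])"
definition W :: "bool list \<Rightarrow> fg_word" where
  "W es = concat (map blk es) @ replicate (length es) lai"

lemma W_Cons: "W (e # es) = la # ((if e then cw else []) @ W es @ [lai])"
proof -
  have "replicate (Suc (length es)) lai = replicate (length es) lai @ [lai]"
    by (simp add: replicate_append_same)
  then show ?thesis by (simp add: W_def blk_def)
qed

lemma conj_q: "qmul (Fa, l) (qmul (Y, 0) (\<lambda>t. - Fa (t + l), - l)) = (\<lambda>t. Y (t - l), 0)"
  by (simp add: qmul_def)

lemma eval_W:
  assumes ga: "g la = (Fa, l)" and gai: "g lai = (\<lambda>t. - Fa (t + l), - l)"
    and gb: "g lb = (Fb, m)" and gbi: "g lbi = (\<lambda>t. - Fb (t + m), - m)"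
  shows "snd (evg g cw) = 0"
    and "evg g (W es) = (\<lambda>t. \<Sum>j<length es. if es!j then fst (evg g cw) (t - (int j + 1) * l) else 0, 0)"
proof -
  show s: "snd (evg g cw) = 0" using assms by (simp add: cw_def qmul_def qone_def)
  define \<delta> where "\<delta> = fst (evg g cw)"
  have C: "evg g cw = (\<delta>, 0)" using s \<delta>_def by (metis prod.collapse)
  show "evg g (W es) = (\<lambda>t. \<Sum>j<length es. if es!j then fst (evg g cw) (t - (int j + 1) * l) else 0, 0)"
    unfolding \<delta>_def[symmetric]
  proof (induction es)
    case Nil then show ?case by (simp add: W_def qone_def)
  next
    case (Cons e es)
    define X where "X = (\<lambda>t. \<Sum>j<length es. if es!j then \<delta> (t - (int j + 1) * l) else 0)"
    have ce: "evg g (if e then cw else []) = (if e then (\<delta>, 0) else qone)" using C by simp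
    have "evg g (W (e # es)) = qmul (Fa, l) (qmul (evg g (if e then cw else [])) (qmul (X, 0) (\<lambda>t. - Fa (t + l), - l)))"
      using Cons ga gai by (simp add: W_Cons evg_append X_def)
    also have "\<dots> = qmul (Fa, l) (qmul (\<lambda>t. (if e then \<delta> t else 0) + X t, 0) (\<lambda>t. - Fa (t + l), - l))"
      using ce by (simp add: qmul_def qone_def)
    also have "\<dots> = (\<lambda>t. (if e then \<delta> (t - l) else 0) + X (t - l), 0)"
      by (simp only: conj_q)
    also have "\<dots> = (\<lambda>t. \<Sum>j<length (e # es). if (e # es)!j then \<delta> (t - (int j + 1) * l) else 0, 0)"
    proof -
      have "X (t - l) = (\<Sum>j<length es. if es!j then \<delta> (t - (int (Suc j) + 1) * l) else 0)" for t
        unfolding X_def by (intro sum.cong refl) (simp add: algebra_simps)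
      then show ?thesis unfolding length_Cons sum.lessThan_Suc_shift by (simp only: nth_Cons_0 nth_Cons_Suc of_nat_0 add_0 mult_1)
    qed
    finally show ?case .
  qed
qed

definition d0f :: "int \<Rightarrow> int" where "d0f t = (if t = 1 then 1 else if t = 0 then -1 else 0)"

definition ind :: "bool list \<Rightarrow> int \<Rightarrow> int" where
  "ind xs i = (if 0 \<le> i \<and> i < int (length xs) \<and> xs ! nat i then 1 else 0)"

lemma sum_single:
  fixes h :: "nat \<Rightarrow> int"
  assumes "jj < n" "\<And>j. j < n \<Longrightarrow> j \<noteq> jj \<Longrightarrow> h j = 0"
  shows "(\<Sum>j<n. h j) = h jj"
proof -
  have "(\<Sum>j<n. h j) = (\<Sum>j<n. if j = jj then h jj else 0)"
    using assms(2) by (intro sum.cong) auto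
  then show ?thesis using assms(1) by simp
qed

lemma sum_zero:
  fixes h :: "nat \<Rightarrow> int"
  assumes "\<And>j. j < n \<Longrightarrow> h j = 0"
  shows "(\<Sum>j<n. h j) = 0"
  using assms by simp

lemma sum_ind:
  assumes "length xs = n"
  shows "(\<Sum>j<n. if xs!j \<and> int j = i then (1::int) else 0) = ind xs i"
proof (cases "0 \<le> i \<and> i < int n")
  case True
  then show ?thesis using assms
    by (subst sum_single[where jj="nat i"]) (auto simp: ind_def)
next
  case False
  then show ?thesis using assms by (auto simp: ind_def intro!: sum_zero)
qed

lemma R_form:
  assumes "length xs = n"
  shows "(\<Sum>j<n. if xs!j then d0f (t - (int j + 1)) else 0) = ind xs (t - 2) - ind xs (t - 1)"
proof -
  have "(\<Sum>j<n. if xs!j then d0f (t - (int j + 1)) else 0)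
     = (\<Sum>j<n. (if xs!j \<and> int j = t - 2 then (1::int) else 0) - (if xs!j \<and> int j = t - 1 then 1 else 0))"
    by (intro sum.cong) (auto simp: d0f_def)
  also have "\<dots> = ind xs (t - 2) - ind xs (t - 1)"
    by (simp only: sum_subtractf sum_ind[OF assms])
  finally show ?thesis .
qed

lemma ind_recover:
  assumes "length xs = n" "length ys = n" "\<And>t. ind xs (t - 2) - ind xs (t - 1) = ind ys (t - 2) - ind ys (t - 1)"
  shows "xs = ys"
proof -
  have "\<forall>i. i < n \<longrightarrow> ind xs (int i) = ind ys (int i)"
  proof (intro allI)
    fix i show "i < n \<longrightarrow> ind xs (int i) = ind ys (int i)"
    proof (induction i)
      case 0
      have "ind xs (-1) = 0" "ind ys (-1) = 0" by (simp_all add: ind_def)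
      then show ?case using assms(3)[of 1] by simp
    next
      case (Suc i)
      then show ?case using assms(3)[of "int i + 2"] by (auto simp: algebra_simps)
    qed
  qed
  then have "\<forall>i<n. xs ! i = ys ! i" using assms(1,2) by (auto simp: ind_def split: if_splits)
  then show ?thesis using assms(1,2) by (simp add: nth_equalityI)
qed


lemma key:
  fixes es es' :: "bool list" and \<delta> :: "int \<Rightarrow> int" and l :: int
  assumes len: "length es = n" "length es' = n" and n4: "4 \<le> n"
    and f1: "es!0" "es!1" "es!(n-1)"
    and f2: "\<not> es'!(n-2)" "es'!(n-1)" "es'!0"
    and fin: "finite {t. \<delta> t \<noteq> 0}"
    and eq: "\<And>t. (\<Sum>j<n. if es!j then \<delta> (t - (int j + 1) * l) else 0)
                 = (\<Sum>j<n. if es'!j then d0f (t - (int j + 1)) else 0)"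
  shows "es = es'"
proof -
  define Lt where "Lt = (\<lambda>t. \<Sum>j<n. if es!j then \<delta> (t - (int j + 1) * l) else 0)"
  define R where "R = (\<lambda>t. ind es' (t - 2) - ind es' (t - 1))"
  have LR: "Lt t = R t" for t using eq[of t] R_form[OF len(2)] by (simp add: Lt_def R_def)
  have nm1: "nat (int n - 1) = n - 1" "nat (int n - 2) = n - 2" using n4 by auto
  have R1: "R 1 = -1" using f2 n4 len by (simp add: R_def ind_def)
  have Rn1: "R (int n + 1) = 1" using f2 n4 len nm1 by (simp add: R_def ind_def)
  have Rn: "R (int n) = -1" using f2 n4 len nm1 by (simp add: R_def ind_def)
  have Rsupp: "R t \<noteq> 0 \<Longrightarrow> 1 \<le> t \<and> t \<le> int n + 1" for t
    using len by (auto simp: R_def ind_def split: if_splits)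
  define D where "D = {t. \<delta> t \<noteq> 0}"
  have finD: "finite D" using fin D_def by simp
  have Dne: "D \<noteq> {}"
  proof
    assume "D = {}"
    then have z: "\<delta> t = 0" for t by (auto simp: D_def)
    have "Lt 1 = 0" unfolding Lt_def by (rule sum_zero) (simp add: z)
    then show False using LR[of 1] R1 by simp
  qed
  define d0 where "d0 = Min D"
  define d1 where "d1 = Max D"
  have dlo: "t < d0 \<Longrightarrow> \<delta> t = 0" for t
  proof (rule ccontr)
    assume "t < d0" "\<delta> t \<noteq> 0"
    then have "t \<in> D" by (simp add: D_def)
    then show False using Min_le[OF finD] \<open>t < d0\<close> d0_def by fastforce
  qed
  have dhi: "t > d1 \<Longrightarrow> \<delta> t = 0" for t
  proof (rule ccontr)
    assume "t > d1" "\<delta> t \<noteq> 0"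
    then have "t \<in> D" by (simp add: D_def)
    then show False using Max_ge[OF finD] \<open>t > d1\<close> d1_def by fastforce
  qed
  have d0nz: "\<delta> d0 \<noteq> 0" using Min_in[OF finD Dne] by (simp add: d0_def D_def)
  have d1nz: "\<delta> d1 \<noteq> 0" using Max_in[OF finD Dne] by (simp add: d1_def D_def)
  have d01: "d0 \<le> d1" using Min_in[OF finD Dne] Max_ge[OF finD] by (simp add: d0_def d1_def)
  have n1: "n - 1 < n" "0 < n" "1 < n" using n4 by auto
  consider "l = 0" | "l > 0" | "l < 0" by linarith
  then show ?thesis
  proof cases
    case 1
    define k where "k = (\<Sum>j<n. if es!j then (1::int) else 0)"
    have "Lt 1 = \<delta> 1 * k" unfolding Lt_def k_def using 1
      by (simp add: sum_distrib_left if_distrib cong: if_cong)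
    have "(\<Sum>j\<in>{0,1}. if es!j then (1::int) else 0) \<le> k"
      unfolding k_def using n4 by (intro sum_mono2) auto
    then have k2: "k \<ge> 2" using f1 by simp
    have "\<delta> 1 * k = -1" using \<open>Lt 1 = \<delta> 1 * k\<close> LR[of 1] R1 by simp
    then have "k dvd 1" by (metis dvd_minus_iff dvd_triv_right)
    then have "k \<le> 1" using zdvd_imp_le by auto
    then show ?thesis using k2 by simp
  next
    case 2
    have A1: "Lt (int n * l + d1) = \<delta> d1"
      unfolding Lt_def
    proof (subst sum_single[where jj="n-1"])
      show "n - 1 < n" using n1 by simp
      fix j assume j: "j < n" "j \<noteq> n - 1"
      have "(int n - int j - 1) * l > 0" using j 2 by (intro mult_pos_pos) auto
      then have "int n * l + d1 - (int j + 1) * l > d1" by (simp add: algebra_simps)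
      then show "(if es ! j then \<delta> (int n * l + d1 - (int j + 1) * l) else 0) = 0" using dhi by simp
    next
      show "(if es ! (n - 1) then \<delta> (int n * l + d1 - (int (n - 1) + 1) * l) else 0) = \<delta> d1"
        using f1 n1 by (simp add: of_nat_diff algebra_simps)
    qed
    have A2: "Lt t = 0" if "t > int n * l + d1" for t
      unfolding Lt_def
    proof (intro sum_zero)
      fix j assume j: "j < n"
      have "(int j + 1) * l \<le> int n * l" using j 2 by (intro mult_right_mono) auto
      then show "(if es ! j then \<delta> (t - (int j + 1) * l) else 0) = 0" using that dhi by simp
    qed
    have A3: "Lt (l + d0) = \<delta> d0"
      unfolding Lt_def
    proof (subst sum_single[where jj=0])
      show "0 < n" using n1 by simp
      fix j assume j: "j < n" "j \<noteq> 0"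
      have "int j * l > 0" using j 2 by (intro mult_pos_pos) auto
      then have "l + d0 - (int j + 1) * l < d0" by (simp add: algebra_simps)
      then show "(if es ! j then \<delta> (l + d0 - (int j + 1) * l) else 0) = 0" using dlo by simp
    qed (use f1 in simp)
    have A4: "Lt t = 0" if "t < l + d0" for t
      unfolding Lt_def
    proof (intro sum_zero)
      fix j assume j: "j < n"
      have "l \<le> (int j + 1) * l" using j 2 by simp
      then show "(if es ! j then \<delta> (t - (int j + 1) * l) else 0) = 0" using that dlo by simp
    qed
    have e1: "int n * l + d1 = int n + 1"
    proof -
      have "int n * l + d1 \<le> int n + 1" using Rsupp[of "int n * l + d1"] A1 LR d1nz by auto
      moreover have "\<not> int n + 1 > int n * l + d1" using A2[of "int n + 1"] LR Rn1 by auto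
      ultimately show ?thesis by linarith
    qed
    have e0: "l + d0 = 1"
    proof -
      have "1 \<le> l + d0" using Rsupp[of "l + d0"] A3 LR d0nz by auto
      moreover have "\<not> 1 < l + d0" using A4[of 1] LR R1 by auto
      ultimately show ?thesis by linarith
    qed
    have l1: "l = 1"
    proof (rule ccontr)
      assume "l \<noteq> 1"
      then have "l \<ge> 2" using 2 by linarith
      then have "(int n - 1) * 2 \<le> (int n - 1) * l" using n4 by (intro mult_left_mono) auto
      then show False using e1 e0 d01 n4 by (simp add: algebra_simps)
    qed
    have dd: "d0 = 0" "d1 = 1" using e0 e1 l1 by auto
    have \<delta>1: "\<delta> 1 = 1" using A1 LR[of "int n + 1"] Rn1 l1 dd by simp
    have \<delta>0: "\<delta> 0 = -1" using A3 LR[of 1] R1 l1 dd by simp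
    have "\<delta> = d0f"
    proof
      fix t :: int
      have "t < 0 \<or> t = 0 \<or> t = 1 \<or> t > 1" by linarith
      then consider "t < 0" | "t = 0" | "t = 1" | "t > 1" by blast
      then show "\<delta> t = d0f t"
        using dlo[of t] dhi[of t] dd \<delta>0 \<delta>1 by cases (auto simp: d0f_def)
    qed
    then have "Lt t = (\<Sum>j<n. if es!j then d0f (t - (int j + 1)) else 0)" for t
      unfolding Lt_def l1 by (simp only: mult_1_right)
    then have "ind es (t - 2) - ind es (t - 1) = ind es' (t - 2) - ind es' (t - 1)" for t
      using LR[of t] R_form[OF len(1), of t] by (simp add: R_def)
    then show ?thesis using ind_recover len by blast
  next
    case 3
    have B1: "Lt (d1 + l) = \<delta> d1"
      unfolding Lt_def
    proof (subst sum_single[where jj=0])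
      show "0 < n" using n1 by simp
      fix j assume j: "j < n" "j \<noteq> 0"
      have "int j * l < 0" using j 3 by (simp add: mult_pos_neg)
      then have "d1 + l - (int j + 1) * l > d1" by (simp add: algebra_simps)
      then show "(if es ! j then \<delta> (d1 + l - (int j + 1) * l) else 0) = 0" using dhi by simp
    qed (use f1 in simp)
    have B2: "Lt t = 0" if "t > d1 + l" for t
      unfolding Lt_def
    proof (intro sum_zero)
      fix j assume j: "j < n"
      have "int j * l \<le> 0" using j 3 by (simp add: mult_nonneg_nonpos)
      then have "(int j + 1) * l \<le> l" by (simp add: algebra_simps)
      then show "(if es ! j then \<delta> (t - (int j + 1) * l) else 0) = 0" using that dhi by simp
    qed
    have B3: "Lt (d0 + int n * l) = \<delta> d0"
      unfolding Lt_def
    proof (subst sum_single[where jj="n-1"])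
      show "n - 1 < n" using n1 by simp
      fix j assume j: "j < n" "j \<noteq> n - 1"
      have "(int n - int j - 1) * l < 0" using j 3 by (intro mult_pos_neg) auto
      then have "d0 + int n * l - (int j + 1) * l < d0" by (simp add: algebra_simps)
      then show "(if es ! j then \<delta> (d0 + int n * l - (int j + 1) * l) else 0) = 0" using dlo by simp
    next
      show "(if es ! (n - 1) then \<delta> (d0 + int n * l - (int (n - 1) + 1) * l) else 0) = \<delta> d0"
        using f1 n1 by (simp add: of_nat_diff algebra_simps)
    qed
    have B4: "Lt t = 0" if "t < d0 + int n * l" for t
      unfolding Lt_def
    proof (intro sum_zero)
      fix j assume j: "j < n"
      have "(int n - int j - 1) * l \<le> 0" using j 3 by (intro mult_nonneg_nonpos) auto
      then have "int n * l \<le> (int j + 1) * l" by (simp add: algebra_simps)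
      then show "(if es ! j then \<delta> (t - (int j + 1) * l) else 0) = 0" using that dlo by simp
    qed
    have e1: "d1 + l = int n + 1"
    proof -
      have "d1 + l \<le> int n + 1" using Rsupp[of "d1 + l"] B1 LR d1nz by auto
      moreover have "\<not> int n + 1 > d1 + l" using B2[of "int n + 1"] LR Rn1 by auto
      ultimately show ?thesis by linarith
    qed
    have e0: "d0 + int n * l = 1"
    proof -
      have "1 \<le> d0 + int n * l" using Rsupp[of "d0 + int n * l"] B3 LR d0nz by auto
      moreover have "\<not> 1 < d0 + int n * l" using B4[of 1] LR R1 by auto
      ultimately show ?thesis by linarith
    qed
    have l1: "l = -1"
    proof (rule ccontr)
      assume "l \<noteq> -1"
      then have "-l \<ge> 2" using 3 by linarith
      then have "(int n - 1) * 2 \<le> (int n - 1) * (-l)" using n4 by (intro mult_left_mono) auto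
      then show False using e1 e0 d01 n4 by (simp add: algebra_simps)
    qed
    have dd: "d0 = int n + 1" "d1 = int n + 2" using e0 e1 l1 by auto
    have "Lt (int n + 1) = \<delta> d1" using B1 e1 by simp
    then have \<delta>2: "\<delta> (int n + 2) = 1" using LR[of "int n + 1"] Rn1 dd by simp
    have "Lt 1 = \<delta> d0" using B3 e0 by simp
    then have \<delta>1: "\<delta> (int n + 1) = -1" using LR[of 1] R1 dd by simp
    have "Lt (int n) = (\<Sum>j<n. (if j = 0 then -1 else 0) + (if j = 1 then 1 else 0))"
      unfolding Lt_def
    proof (intro sum.cong refl)
      fix j assume j: "j \<in> {..<n}"
      show "(if es ! j then \<delta> (int n - (int j + 1) * l) else 0) = (if j = 0 then -1 else 0) + (if j = 1 then 1 else 0)"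
      proof (cases "j \<ge> 2")
        case True
        then have "int n - (int j + 1) * l > d1" using l1 dd by simp
        then show ?thesis using True dhi by simp
      next
        case False
        then have "j = 0 \<or> j = 1" by auto
        then show ?thesis using f1 l1 \<delta>1 \<delta>2 by (auto simp: algebra_simps)
      qed
    qed
    also have "\<dots> = 0" using n1 by (simp add: sum.distrib)
    finally show ?thesis using LR[of "int n"] Rn by simp
  qed
qed

definition fam :: "bool list \<Rightarrow> bool list" where "fam xs = True # True # xs @ [False, True]"
definition wel :: "bool list \<Rightarrow> fg_word" where "wel es = reduce (W es)"

lemma fam_facts:
  assumes "n = length xs + 4"
  shows "length (fam xs) = n" "fam xs ! 0" "fam xs ! 1" "fam xs ! (n - 1)" "\<not> fam xs ! (n - 2)"
  using assms by (simp_all add: fam_def nth_Cons' nth_append)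

lemma set_W: "set (W es) \<subseteq> {la, lai, lb, lbi}"
  by (induction es) (auto simp: W_def blk_def cw_def)

lemma W_letters: "2 \<le> r \<Longrightarrow> \<forall>x\<in>set (W es). fst x < r"
  using set_W by fastforce

lemma length_W: "length (W es) \<le> 6 * length es"
  by (induction es) (auto simp: W_Cons cw_def, simp add: W_def)

lemma reduce_Cons_mult: "reduce (x # ws) = [x] \<otimes>\<^bsub>free_group r\<^esub> reduce ws"
  by (simp add: mult_single reduce_Cons reduce_id reduce_reduced)

lemma hom_nil: "f \<in> hom (free_group r) Qg \<Longrightarrow> f [] = qone"
  using hom_reduce[of f r "[]"] by (simp add: reduce_def)

lemma hom_inv_letter:
  assumes f: "f \<in> hom (free_group r) Qg" and x: "fst x < r"
  shows "f [flip x] = (\<lambda>t. - fst (f [x]) (t + snd (f [x])), - snd (f [x]))"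
proof (rule qinv_unique)
  have fx: "fst (flip x) < r" using x by (simp add: flip_def)
  have "[x] \<otimes>\<^bsub>free_group r\<^esub> [flip x] = []"
    by (cases x) (simp add: free_group_def reduce_def push_def cancels_def flip_def)
  moreover have "f ([x] \<otimes>\<^bsub>free_group r\<^esub> [flip x]) = f [x] \<otimes>\<^bsub>Qg\<^esub> f [flip x]"
    by (rule hom_mult[OF f single_carrier[OF x] single_carrier[OF fx]])
  ultimately have "f [x] \<otimes>\<^bsub>Qg\<^esub> f [flip x] = f []" by simp
  then show "qmul (f [x]) (f [flip x]) = qone" using hom_nil[OF f] by (simp add: Qg_def)
qed

lemma eval_hom_W:
  assumes f: "f \<in> hom (free_group r) Qg" and r: "2 \<le> r"
  shows "f (wel es) = (\<lambda>t. \<Sum>j<length es. if es!j then fst (f (reduce cw)) (t - (int j + 1) * snd (f [la])) else 0, 0)"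
    and "finite {t. fst (f (reduce cw)) t \<noteq> 0}"
proof -
  let ?g = "\<lambda>x. f [x]"
  have a: "?g la = (fst (f [la]), snd (f [la]))" by simp
  have ai: "?g lai = (\<lambda>t. - fst (f [la]) (t + snd (f [la])), - snd (f [la]))"
    using hom_inv_letter[OF f, of la] r by (simp add: flip_def)
  have b: "?g lb = (fst (f [lb]), snd (f [lb]))" by simp
  have bi: "?g lbi = (\<lambda>t. - fst (f [lb]) (t + snd (f [lb])), - snd (f [lb]))"
    using hom_inv_letter[OF f, of lb] r by (simp add: flip_def)
  have cwl: "\<forall>x\<in>set cw. fst x < r" using r by (simp add: cw_def)
  have fc: "f (reduce cw) = evg ?g cw" using hom_reduce[OF f cwl] .
  show "f (wel es) = (\<lambda>t. \<Sum>j<length es. if es!j then fst (f (reduce cw)) (t - (int j + 1) * snd (f [la])) else 0, 0)"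
  proof -
    have "f (wel es) = evg ?g (W es)" unfolding wel_def by (rule hom_reduce[OF f W_letters[OF r]])
    also have "\<dots> = (\<lambda>t. \<Sum>j<length es. if es!j then fst (evg ?g cw) (t - (int j + 1) * snd (f [la])) else 0, 0)"
      by (rule eval_W(2)[OF a ai b bi])
    finally show ?thesis unfolding fc .
  qed
  have "f (reduce cw) \<in> carrier Qg" using f reduce_carrier[OF cwl] by (rule hom_in_carrier)
  then show "finite {t. fst (f (reduce cw)) t \<noteq> 0}" by (simp add: Qg_def)
qed

lemma ev_cw: "fst (evg img cw) = d0f"
proof
  fix t :: int
  show "fst (evg img cw) t = d0f t"
    by (simp add: cw_def img_def qmul_def qone_def d0f_def)
qed

lemma eval_ev_W:
  "evg img (wel es) = (\<lambda>t. \<Sum>j<length es. if es!j then d0f (t - (int j + 1)) else 0, 0)"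
proof -
  have a: "img la = ((\<lambda>t. 0), 1)" by (simp add: img_def)
  have ai: "img lai = (\<lambda>t. - (\<lambda>t. 0) (t + 1), - 1)" by (simp add: img_def)
  have b: "img lb = ((\<lambda>t. if t = 0 then 1 else 0), 0)" by (simp add: img_def)
  have bi: "img lbi = (\<lambda>t. - (\<lambda>t. if t = 0 then 1 else 0) (t + 0), - 0)" by (simp add: img_def fun_eq_iff)
  show ?thesis unfolding wel_def ev_reduce eval_W(2)[OF a ai b bi] ev_cw by (simp only: mult_1_right)
qed

lemma orbit_inj:
  assumes r: "2 \<le> r" and len: "length xs = length ys"
    and orb: "aut_orbit (free_group r) (wel (fam xs)) = aut_orbit (free_group r) (wel (fam ys))"
  shows "xs = ys"
proof -
  define n where "n = length xs + 4"
  have "wel (fam ys) \<in> aut_orbit (free_group r) (wel (fam ys))"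
    unfolding aut_orbit_def by (intro CollectI exI[where x="\<lambda>x. x"] conjI) (simp_all add: iso_set_refl)
  then have "wel (fam ys) \<in> aut_orbit (free_group r) (wel (fam xs))" using orb by simp
  then obtain \<phi> where phi0: "wel (fam ys) = \<phi> (wel (fam xs))" "\<phi> \<in> iso (free_group r) (free_group r)"
    unfolding aut_orbit_def by blast
  then have phi: "\<phi> \<in> iso (free_group r) (free_group r)" "\<phi> (wel (fam xs)) = wel (fam ys)" by simp_all
  define f where "f = evg img \<circ> \<phi>"
  have f: "f \<in> hom (free_group r) Qg"
    unfolding f_def by (rule hom_compose[OF iso_imp_homomorphism[OF phi(1)] ev_hom])
  define \<delta> where "\<delta> = fst (f (reduce cw))"
  define l where "l = snd (f [la])"
  have nx: "n = length xs + 4" and ny: "n = length ys + 4" using n_def len by auto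
  have "f (wel (fam xs)) = evg img (wel (fam ys))" using phi(2) unfolding f_def comp_def by (rule arg_cong)
  then have "(\<lambda>t. \<Sum>j<n. if fam xs!j then \<delta> (t - (int j + 1) * l) else 0)
      = (\<lambda>t. \<Sum>j<n. if fam ys!j then d0f (t - (int j + 1)) else 0)"
    unfolding eval_hom_W(1)[OF f r] eval_ev_W fam_facts(1)[OF nx] fam_facts(1)[OF ny] \<delta>_def l_def
    unfolding prod.inject by (rule conjunct1)
  then have eq: "\<And>t. (\<Sum>j<n. if fam xs!j then \<delta> (t - (int j + 1) * l) else 0)
      = (\<Sum>j<n. if fam ys!j then d0f (t - (int j + 1)) else 0)"
    by (rule fun_cong)
  have n4: "4 \<le> n" using nx by simp
  have "fam xs = fam ys"
    by (rule key[OF fam_facts(1)[OF nx] fam_facts(1)[OF ny] n4 fam_facts(2,3,4)[OF nx]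
          fam_facts(5,4,2)[OF ny] eval_hom_W(2)[OF f r, folded \<delta>_def] eq])
  then show ?thesis by (simp add: fam_def)
qed

lemma sum_pow_le: "(\<Sum>i\<le>n. (k::nat) ^ i) \<le> (k + 1) ^ n"
proof (induction n)
  case (Suc n)
  have "k ^ Suc n \<le> k * (k + 1) ^ n" by (simp add: mult_le_mono2 power_mono)
  moreover have "(\<Sum>i\<le>Suc n. k ^ i) = (\<Sum>i\<le>n. k ^ i) + k ^ Suc n" by simp
  ultimately have "(\<Sum>i\<le>Suc n. k ^ i) \<le> (k + 1) ^ n + k * (k + 1) ^ n" using Suc by linarith
  then show ?case by simp
qed simp

context group begin

lemma foldr_closed: "set u \<subseteq> carrier G \<Longrightarrow> foldr (\<otimes>) u \<one> \<in> carrier G"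
  by (induction u) auto

lemma foldr_app: "set u \<subseteq> carrier G \<Longrightarrow> set v \<subseteq> carrier G \<Longrightarrow>
   foldr (\<otimes>) (u @ v) \<one> = foldr (\<otimes>) u \<one> \<otimes> foldr (\<otimes>) v \<one>"
  by (induction u) (auto simp: m_assoc foldr_closed)

lemma gen_rep:
  assumes S: "S \<subseteq> carrier G" and g: "g \<in> generate G S"
  shows "\<exists>ws. set ws \<subseteq> S \<union> m_inv G ` S \<and> foldr (\<otimes>) ws \<one> = g"
  using g
proof (induction rule: generate.induct)
  case one then show ?case by (intro exI[of _ "[]"]) simp
next
  case (incl h) then show ?case using S by (intro exI[of _ "[h]"]) auto
next
  case (inv h) then show ?case using S by (intro exI[of _ "[inv h]"]) auto
next
  case (eng h1 h2)
  then obtain u v where u: "set u \<subseteq> S \<union> m_inv G ` S" "foldr (\<otimes>) u \<one> = h1"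
    and v: "set v \<subseteq> S \<union> m_inv G ` S" "foldr (\<otimes>) v \<one> = h2" by blast
  have T: "S \<union> m_inv G ` S \<subseteq> carrier G" using S by auto
  have "foldr (\<otimes>) (u @ v) \<one> = h1 \<otimes> h2"
    using foldr_app[of u v] u v T by (metis subset_trans)
  moreover have "set (u @ v) \<subseteq> S \<union> m_inv G ` S" using u v by auto
  ultimately show ?case by blast
qed

lemma wl_le: "set ws \<subseteq> S \<union> m_inv G ` S \<Longrightarrow> foldr (\<otimes>) ws \<one> = g \<Longrightarrow> word_length G S g \<le> length ws"
  unfolding word_length_def by (rule Least_le) blast

lemma wl_rep: "\<exists>ws. set ws \<subseteq> S \<union> m_inv G ` S \<and> foldr (\<otimes>) ws \<one> = g \<Longrightarrow>
   \<exists>ws. length ws = word_length G S g \<and> set ws \<subseteq> S \<union> m_inv G ` S \<and> foldr (\<otimes>) ws \<one> = g"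
  unfolding word_length_def by (rule LeastI_ex) blast

lemma iso_comp: "\<phi> \<in> iso G G \<Longrightarrow> \<psi> \<in> iso G G \<Longrightarrow> \<psi> \<circ> \<phi> \<in> iso G G"
proof -
  assume a: "\<phi> \<in> iso G G" "\<psi> \<in> iso G G"
  have "\<psi> \<circ> \<phi> \<in> hom G G"
    by (rule Group.hom_compose[OF iso_imp_homomorphism[OF a(1)] iso_imp_homomorphism[OF a(2)]])
  moreover have "bij_betw (\<psi> \<circ> \<phi>) (carrier G) (carrier G)"
    using a by (intro bij_betw_trans[of _ _ "carrier G"]) (auto simp: iso_def)
  ultimately show ?thesis by (simp add: iso_def)
qed

lemma orbit_eq:
  assumes h: "h \<in> carrier G" and g: "g \<in> aut_orbit G h"
  shows "aut_orbit G g = aut_orbit G h" "g \<in> carrier G"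
proof -
  obtain \<phi> where phi: "g = \<phi> h" "\<phi> \<in> iso G G" using g unfolding aut_orbit_def by blast
  show gc: "g \<in> carrier G" unfolding phi(1) by (rule hom_in_carrier[OF iso_imp_homomorphism[OF phi(2)] h])
  define \<phi>' where "\<phi>' = inv_into (carrier G) \<phi>"
  have phi': "\<phi>' \<in> iso G G" unfolding \<phi>'_def using iso_set_sym[OF phi(2)] .
  have inj: "inj_on \<phi> (carrier G)" using phi(2) by (simp add: iso_def bij_betw_def)
  have hg: "h = \<phi>' g" unfolding \<phi>'_def phi(1) using inv_into_f_f[OF inj h] by simp
  show "aut_orbit G g = aut_orbit G h"
  proof
    show "aut_orbit G g \<subseteq> aut_orbit G h"
    proof
      fix y assume "y \<in> aut_orbit G g"
      then obtain \<psi> where "y = \<psi> g" "\<psi> \<in> iso G G" unfolding aut_orbit_def by blast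
      then have "y = (\<psi> \<circ> \<phi>) h" "\<psi> \<circ> \<phi> \<in> iso G G" using phi iso_comp by auto
      then show "y \<in> aut_orbit G h" unfolding aut_orbit_def by blast
    qed
  next
    show "aut_orbit G h \<subseteq> aut_orbit G g"
    proof
      fix y assume "y \<in> aut_orbit G h"
      then obtain \<psi> where "y = \<psi> h" "\<psi> \<in> iso G G" unfolding aut_orbit_def by blast
      then have "y = (\<psi> \<circ> \<phi>') g" "\<psi> \<circ> \<phi>' \<in> iso G G" using hg phi' iso_comp by auto
      then show "y \<in> aut_orbit G g" unfolding aut_orbit_def by blast
    qed
  qed
qed

lemma self_orbit: "g \<in> aut_orbit G g"
  unfolding aut_orbit_def by (intro CollectI exI[where x="\<lambda>x. x"] conjI) (simp_all add: iso_set_refl)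

lemma upper_bound:
  assumes fin: "finite S" and S: "S \<subseteq> carrier G" and gen: "generate G S = carrier G"
  shows "finite {Orb \<in> aut_orbit G ` carrier G. \<exists>g\<in>Orb. word_length G S g \<le> n}"
    and "aut_growth G S n \<le> (card (S \<union> m_inv G ` S) + 1) ^ n"
proof -
  let ?T = "S \<union> m_inv G ` S"
  let ?O = "{Orb \<in> aut_orbit G ` carrier G. \<exists>g\<in>Orb. word_length G S g \<le> n}"
  let ?B = "{g \<in> carrier G. word_length G S g \<le> n}"
  let ?L = "{ws. set ws \<subseteq> ?T \<and> length ws \<le> n}"
  have finT: "finite ?T" using fin by simp
  have OB: "?O \<subseteq> aut_orbit G ` ?B"
  proof
    fix Orb assume o: "Orb \<in> ?O"
    then have o1: "Orb \<in> aut_orbit G ` carrier G" and o2: "\<exists>g\<in>Orb. word_length G S g \<le> n"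
      by simp_all
    from o1 obtain h where h: "Orb = aut_orbit G h" "h \<in> carrier G" by (rule imageE)
    from o2 obtain g where g: "g \<in> Orb" "word_length G S g \<le> n" by (rule bexE)
    have ga: "g \<in> aut_orbit G h" using g(1) h(1) by simp
    have e: "aut_orbit G g = Orb" using orbit_eq(1)[OF h(2) ga] h(1) by simp
    have gc: "g \<in> ?B" using orbit_eq(2)[OF h(2) ga] g(2) by simp
    show "Orb \<in> aut_orbit G ` ?B" by (rule image_eqI[where f="aut_orbit G" and x=g, OF e[symmetric] gc])
  qed
  have BL: "?B \<subseteq> (\<lambda>ws. foldr (\<otimes>) ws \<one>) ` ?L"
  proof
    fix g assume g: "g \<in> ?B"
    then have "\<exists>ws. set ws \<subseteq> ?T \<and> foldr (\<otimes>) ws \<one> = g" using gen_rep[OF S, of g] gen by simp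
    then obtain ws where ws: "length ws = word_length G S g" "set ws \<subseteq> ?T" "foldr (\<otimes>) ws \<one> = g"
      using wl_rep by blast
    have "ws \<in> ?L" using ws g by simp
    then show "g \<in> (\<lambda>ws. foldr (\<otimes>) ws \<one>) ` ?L" by (rule image_eqI[where f="\<lambda>ws. foldr (\<otimes>) ws \<one>" and x=ws, OF ws(3)[symmetric]])
  qed
  have finL: "finite ?L" using finite_lists_length_le[OF finT] .
  have finB: "finite ?B" using finite_subset[OF BL] finL by blast
  show finO: "finite ?O" using finite_subset[OF OB] finB by blast
  have "card ?O \<le> card (aut_orbit G ` ?B)" using OB finB by (intro card_mono) auto
  also have "\<dots> \<le> card ?B" using card_image_le finB by blast
  also have "\<dots> \<le> card ((\<lambda>ws. foldr (\<otimes>) ws \<one>) ` ?L)" using BL finL by (intro card_mono) auto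
  also have "\<dots> \<le> card ?L" using card_image_le finL by blast
  also have "\<dots> = (\<Sum>i\<le>n. card ?T ^ i)" using card_lists_length_le[OF finT] .
  also have "\<dots> \<le> (card ?T + 1) ^ n" by (rule sum_pow_le)
  finally show "aut_growth G S n \<le> (card ?T + 1) ^ n" unfolding aut_growth_def .
qed

end

lemma lower_bound:
  assumes r: "2 \<le> r" and fin: "finite S" and S: "S \<subseteq> carrier (free_group r)"
    and gen: "generate (free_group r) S = carrier (free_group r)"
  shows "\<exists>M. \<forall>N L. 4 \<le> N \<longrightarrow> 6 * M * N \<le> L \<longrightarrow> 2 ^ (N - 4) \<le> aut_growth (free_group r) S L"
proof -
  interpret G: group "free_group r" by (rule G_group)
  let ?G = "free_group r"
  let ?T = "S \<union> m_inv ?G ` S"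
  have Tc: "?T \<subseteq> carrier ?G" using S by auto
  define rep where "rep x = (SOME ws. set ws \<subseteq> ?T \<and> foldr (\<otimes>\<^bsub>?G\<^esub>) ws \<one>\<^bsub>?G\<^esub> = [x])" for x
  have rep: "set (rep x) \<subseteq> ?T \<and> foldr (\<otimes>\<^bsub>?G\<^esub>) (rep x) \<one>\<^bsub>?G\<^esub> = [x]" if "fst x < r" for x
  proof -
    have "[x] \<in> generate ?G S" using gen single_carrier[OF that] by simp
    then have "\<exists>ws. set ws \<subseteq> ?T \<and> foldr (\<otimes>\<^bsub>?G\<^esub>) ws \<one>\<^bsub>?G\<^esub> = [x]" by (rule G.gen_rep[OF S])
    then show ?thesis unfolding rep_def by (rule someI_ex)
  qed
  have conc: "set (concat (map rep ws)) \<subseteq> ?T \<and> foldr (\<otimes>\<^bsub>?G\<^esub>) (concat (map rep ws)) \<one>\<^bsub>?G\<^esub> = reduce ws"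
    if "\<forall>x\<in>set ws. fst x < r" for ws
    using that
  proof (induction ws)
    case Nil then show ?case by (simp add: reduce_def free_group_def)
  next
    case (Cons x ws)
    have rx: "set (rep x) \<subseteq> ?T" "foldr (\<otimes>\<^bsub>?G\<^esub>) (rep x) \<one>\<^bsub>?G\<^esub> = [x]" using rep Cons.prems by auto
    have IH: "set (concat (map rep ws)) \<subseteq> ?T" "foldr (\<otimes>\<^bsub>?G\<^esub>) (concat (map rep ws)) \<one>\<^bsub>?G\<^esub> = reduce ws"
      using Cons by auto
    have "foldr (\<otimes>\<^bsub>?G\<^esub>) (rep x @ concat (map rep ws)) \<one>\<^bsub>?G\<^esub>
        = foldr (\<otimes>\<^bsub>?G\<^esub>) (rep x) \<one>\<^bsub>?G\<^esub> \<otimes>\<^bsub>?G\<^esub> foldr (\<otimes>\<^bsub>?G\<^esub>) (concat (map rep ws)) \<one>\<^bsub>?G\<^esub>"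
      using G.foldr_app rx(1) IH(1) Tc by (meson subset_trans)
    also have "\<dots> = reduce (x # ws)" using rx(2) IH(2) reduce_Cons_mult by simp
    finally show ?case using rx(1) IH(1) by simp
  qed
  define M where "M = length (rep la) + length (rep lai) + length (rep lb) + length (rep lbi)"
  have lenc: "length (concat (map rep ws)) \<le> M * length ws" if "set ws \<subseteq> {la, lai, lb, lbi}" for ws
    using that
  proof (induction ws)
    case (Cons x ws)
    have "length (rep x) \<le> M" using Cons.prems by (auto simp: M_def)
    then show ?case using Cons by simp
  qed simp
  have wl: "word_length ?G S (wel es) \<le> M * (6 * length es)" for es
  proof -
    have "word_length ?G S (wel es) \<le> length (concat (map rep (W es)))"
      using conc[OF W_letters[OF r]] G.wl_le unfolding wel_def by blast
    also have "\<dots> \<le> M * length (W es)" using lenc[OF set_W] .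
    also have "\<dots> \<le> M * (6 * length es)" using length_W by simp
    finally show ?thesis .
  qed
  show ?thesis
  proof (intro exI allI impI)
    fix N L assume N: "4 \<le> N" and L: "6 * M * N \<le> L"
    let ?F = "{xs. set xs \<subseteq> (UNIV :: bool set) \<and> length xs = N - 4}"
    let ?O = "{Orb \<in> aut_orbit ?G ` carrier ?G. \<exists>g\<in>Orb. word_length ?G S g \<le> L}"
    have cF: "card ?F = 2 ^ (N - 4)" using card_lists_length_eq[of "UNIV :: bool set" "N - 4"] by simp
    have inj: "inj_on (\<lambda>xs. aut_orbit ?G (wel (fam xs))) ?F"
    proof (rule inj_onI)
      fix xs ys assume "xs \<in> ?F" "ys \<in> ?F" "aut_orbit ?G (wel (fam xs)) = aut_orbit ?G (wel (fam ys))"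
      then show "xs = ys" using orbit_inj[OF r] by simp
    qed
    have sub: "(\<lambda>xs. aut_orbit ?G (wel (fam xs))) ` ?F \<subseteq> ?O"
    proof
      fix Orb assume "Orb \<in> (\<lambda>xs. aut_orbit ?G (wel (fam xs))) ` ?F"
      then obtain xs where xs: "length xs = N - 4" "Orb = aut_orbit ?G (wel (fam xs))" by auto
      have c: "wel (fam xs) \<in> carrier ?G" unfolding wel_def by (rule reduce_carrier[OF W_letters[OF r]])
      have "length (fam xs) = N" using xs N by (simp add: fam_def)
      then have "word_length ?G S (wel (fam xs)) \<le> L" using wl[of "fam xs"] L by (simp add: mult.assoc)
      then have "\<exists>g\<in>Orb. word_length ?G S g \<le> L" using G.self_orbit xs(2) by blast
      moreover have "Orb \<in> aut_orbit ?G ` carrier ?G" using c xs(2) by blast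
      ultimately show "Orb \<in> ?O" by blast
    qed
    have "2 ^ (N - 4) = card ((\<lambda>xs. aut_orbit ?G (wel (fam xs))) ` ?F)"
      using card_image[OF inj] cF by simp
    also have "\<dots> \<le> card ?O" using sub G.upper_bound(1)[OF fin S gen] by (rule card_mono[rotated])
    finally show "2 ^ (N - 4) \<le> aut_growth ?G S L" unfolding aut_growth_def .
  qed
qed

theorem mainTheorem4:
  fixes r :: nat and S :: "fg_word set"
  assumes "r \<ge> 2"
    and "finite S" and "S \<subseteq> carrier (free_group r)"
    and "generate (free_group r) S = carrier (free_group r)"
  shows "aut_growth (free_group r) S \<sim>\<^sub>g (\<lambda>n. 2 ^ n)"
proof -
  interpret G: group "free_group r" by (rule G_group)
  let ?a = "aut_growth (free_group r) S"
  define K where "K = card (S \<union> m_inv (free_group r) ` S) + 1"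
  have up: "?a n \<le> K ^ n" for n unfolding K_def by (rule G.upper_bound(2)[OF assms(2,3,4)])
  have K1: "1 \<le> K" by (simp add: K_def)
  have le1: "?a \<preccurlyeq>\<^sub>g (\<lambda>n. 2 ^ n)"
    unfolding growth_le_def
  proof (intro exI[of _ K] conjI allI)
    show "K \<noteq> 0" by (simp add: K_def)
    fix n
    have "K ^ n \<le> (2 ^ K) ^ n" using less_exp[of K] by (intro power_mono) auto
    also have "\<dots> = 2 ^ (K * n)" by (simp add: power_mult)
    also have "\<dots> \<le> 2 ^ (K * n + K)" by (intro power_increasing) auto
    also have "\<dots> \<le> K * 2 ^ (K * n + K)" using mult_le_mono1[OF K1, of "2 ^ (K * n + K)"] by simp
    finally show "?a n \<le> K * 2 ^ (K * n + K) + K" using up[of n] by linarith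
  qed
  from lower_bound[OF assms] obtain M where
    M: "\<forall>N L. 4 \<le> N \<longrightarrow> 6 * M * N \<le> L \<longrightarrow> 2 ^ (N - 4) \<le> ?a L" by (elim exE)
  define c where "c = 16 + 6 * M"
  have le2: "(\<lambda>n. 2 ^ n) \<preccurlyeq>\<^sub>g ?a"
    unfolding growth_le_def
  proof (intro exI[of _ c] conjI allI)
    show "c \<noteq> 0" by (simp add: c_def)
    fix n :: nat
    show "2 ^ n \<le> c * ?a (c * n + c) + c"
    proof (cases "4 \<le> n")
      case False
      then have "n \<le> 3" by simp
      then have "(2::nat) ^ n \<le> 2 ^ 3" by (intro power_increasing) auto
      moreover have "(8::nat) \<le> c" by (simp add: c_def)
      ultimately show ?thesis by simp
    next
      case True
      have "6 * M * n \<le> c * n" unfolding c_def by (intro mult_right_mono) auto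
      then have "6 * M * n \<le> c * n + c" by (rule trans_le_add1)
      then have A: "2 ^ (n - 4) \<le> ?a (c * n + c)" by (rule M[rule_format, OF True])
      define k where "k = n - 4"
      have k: "n = k + 4" using True k_def by simp
      have B: "(2::nat) ^ n = 16 * 2 ^ (n - 4)" unfolding k by (simp add: power_add)
      have "(2::nat) ^ n \<le> 16 * ?a (c * n + c)" unfolding B using A by simp
      also have "\<dots> \<le> c * ?a (c * n + c)" by (intro mult_right_mono) (simp_all add: c_def)
      finally show ?thesis by simp
    qed
  qed
  show ?thesis unfolding growth_equiv_def using le1 le2 by blast
qed

end
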